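(* Let $H^T_{\mathbb{FC}}$ be the mapping on the running-time semantics of flowcharts defined in the context. Then $H^T_{\mathbb{FC}}$ is a verification functor: for all flowcharts $A,B$, $H^T_{\mathbb{FC}}([\![\mathsf{Seq}(A,B)]\!]) = H^T_{\mathbb{FC}}([\![B]\!])\circ H^T_{\mathbb{FC}}([\![A]\!])$, $H^T_{\mathbb{FC}}([\![\mathsf{Par}(A,B)]\!]) = H^T_{\mathbb{FC}}([\![A]\!])\times H^T_{\mathbb{FC}}([\![B]\!])$, and whenever $[\![A]\!]:\Sigma^{n}\uplus\Sigma^{k}\to\Sigma^{m}\uplus\Sigma^{k}$, for all $P:\Sigma^n\to\mathbb{N}^\infty$, $R:\Sigma^m\to\mathbb{N}^\infty$: $(P,R)\in H^T_{\mathbb{FC}}([\![\mathsf{Fb}(A)]\!])$ iff there is $Q:\Sigma^k\to\mathbb{N}^\infty$ with $((P,Q),(R,Q))\in H^T_{\mathbb{FC}}([\![A]\!])$.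
   Context: $\Sigma=\mathsf{Store}$ is the set of maps from program variables to $\mathbb{Z}$, and $\Sigma^n=\Sigma\uplus\dots\uplus\Sigma$ ($n$ summands). Flowcharts are built from basic flowcharts — identity, assignment $x:=t$, join $\Delta:\Sigma\uplus\Sigma\to\Sigma$, twist on $\Sigma\uplus\Sigma$, conditional fork $\mathrm{cond}_b:\Sigma\to\Sigma\uplus\Sigma$ (sending $\rho$ to the left summand if $\neg b_\rho$, to the right otherwise) — by sequential composition $\mathsf{Seq}$, parallel composition $\mathsf{Par}$ (disjoint union) and feedback $\mathsf{Fb}$ (the disjoint-union trace: iterate the flowchart, feeding outputs in the last summand back into the last input summand until an output lands in the first summands). The running time of a flowchart on a terminating input is the number of evaluations of non-neutral basic operations (every basic flowchart except identity and twist counts one step); the semantics $[\![A]\!]$ identifies two flowcharts iff they have the same input–output partial function and the same running time on all terminating inputs. $\mathbb{N}^\infty=\mathbb{N}\cup\{\infty\}$ with $n\le\infty$ and $n+\infty=\infty$. $H^T_{\mathbb{FC}}(\Sigma^n)$ is the set of functions $\Sigma^n\to\mathbb{N}^\infty$ (equivalently $n$-tuples of functions $\Sigma\to\mathbb{N}^\infty$, so $H^T_{\mathbb{FC}}(\Sigma^n\uplus\Sigma^m)=H^T_{\mathbb{FC}}(\Sigma^n)\times H^T_{\mathbb{FC}}(\Sigma^m)$), pre-ordered pointwise. For a flowchart $A$ with $[\![A]\!]:\Sigma^n\to\Sigma^m$ and $Q:\Sigma^m\to\mathbb{N}^\infty$, the relative running time $\mathsf{RRT}(A,Q):\Sigma^n\to\mathbb{N}^\infty$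 is $\infty$ at $\rho$ if $A$ does not terminate on $\rho$, and otherwise $\mathsf{RunTime}(A,\rho)+Q([\![A]\!](\rho))$. Define $(P,Q)\in H^T_{\mathbb{FC}}([\![A]\!])$ iff $P(\rho)\ge\mathsf{RRT}(A,Q)(\rho)$ for all $\rho$. Composition and product of relations are the usual relational ones. *)

theory Defs
  imports Main "HOL-Library.Extended_Nat"
begin

type_synonym vname = string
type_synonym store = "vname \<Rightarrow> int"

text \<open>An element of Sigma^n is a pair (i, rho) with i < n: the summand index and the store.\<close>
type_synonym state = "nat \<times> store"

text \<open>Flowcharts. Terms and boolean conditions are given by their meaning on stores.
  Fb k A traces the last k summands (A : Sigma^(n+k) -> Sigma^(m+k)).\<close>
datatype fc =
    Ident
  | Assign vname "store \<Rightarrow> int"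
  | Join
  | Twist
  | Cond "store \<Rightarrow> bool"
  | Seq fc fc
  | Par fc fc
  | Fb nat fc

fun nin :: "fc \<Rightarrow> nat" where
  "nin Ident = 1"
| "nin (Assign x t) = 1"
| "nin Join = 2"
| "nin Twist = 2"
| "nin (Cond b) = 1"
| "nin (Seq A B) = nin A"
| "nin (Par A B) = nin A + nin B"
| "nin (Fb k A) = nin A - k"

fun nout :: "fc \<Rightarrow> nat" where
  "nout Ident = 1"
| "nout (Assign x t) = 1"
| "nout Join = 1"
| "nout Twist = 2"
| "nout (Cond b) = 2"
| "nout (Seq A B) = nout B"
| "nout (Par A B) = nout A + nout B"
| "nout (Fb k A) = nout A - k"

fun wf :: "fc \<Rightarrow> bool" where
  "wf (Seq A B) = (wf A \<and> wf B \<and> nout A = nin B)"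
| "wf (Par A B) = (wf A \<and> wf B)"
| "wf (Fb k A) = (wf A \<and> k \<le> nin A \<and> k \<le> nout A)"
| "wf _ = True"

text \<open>exec A x y t: A run on input x terminates with output y after t non-neutral steps.
  fbiter k A y z t: the feedback loop of Fb k A, started at the output y of A, exits at z
  after t further steps.\<close>
inductive exec :: "fc \<Rightarrow> state \<Rightarrow> state \<Rightarrow> nat \<Rightarrow> bool"
  and fbiter :: "nat \<Rightarrow> fc \<Rightarrow> state \<Rightarrow> state \<Rightarrow> nat \<Rightarrow> bool" where
  ex_id: "exec Ident (0, \<rho>) (0, \<rho>) 0"
| ex_assign: "exec (Assign x t) (0, \<rho>) (0, \<rho>(x := t \<rho>)) 1"
| ex_join: "i < 2 \<Longrightarrow> exec Join (i, \<rho>) (0, \<rho>) 1"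
| ex_twist: "i < 2 \<Longrightarrow> exec Twist (i, \<rho>) (1 - i, \<rho>) 0"
| ex_cond: "exec (Cond b) (0, \<rho>) (if b \<rho> then 1 else 0, \<rho>) 1"
| ex_seq: "exec A x y t1 \<Longrightarrow> exec B y z t2 \<Longrightarrow> exec (Seq A B) x z (t1 + t2)"
| ex_parL: "i < nin A \<Longrightarrow> exec A (i, \<rho>) (j, \<rho>') t \<Longrightarrow> exec (Par A B) (i, \<rho>) (j, \<rho>') t"
| ex_parR: "nin A \<le> i \<Longrightarrow> exec B (i - nin A, \<rho>) (j, \<rho>') t
            \<Longrightarrow> exec (Par A B) (i, \<rho>) (j + nout A, \<rho>') t"
| ex_fb: "i < nin A - k \<Longrightarrow> exec A (i, \<rho>) y t1 \<Longrightarrow> fbiter k A y z t2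
            \<Longrightarrow> exec (Fb k A) (i, \<rho>) z (t1 + t2)"
| fb_exit: "j < nout A - k \<Longrightarrow> fbiter k A (j, \<rho>) (j, \<rho>) 0"
| fb_loop: "nout A - k \<le> j \<Longrightarrow> exec A (j - (nout A - k) + (nin A - k), \<rho>) y t1
            \<Longrightarrow> fbiter k A y z t2 \<Longrightarrow> fbiter k A (j, \<rho>) z (t1 + t2)"

type_synonym sem = "nat \<times> nat \<times> (state \<Rightarrow> state \<Rightarrow> nat \<Rightarrow> bool)"

definition sem :: "fc \<Rightarrow> sem" where
  "sem A = (nin A, nout A, exec A)"

text \<open>Elements of H(Sigma^n): n-tuples (lists of length n) of functions store -> N^infty.\<close>
type_synonym pred = "(store \<Rightarrow> enat) list"

text \<open>Relative running time (infinity if there is no terminating run).\<close>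
definition RRT :: "(state \<Rightarrow> state \<Rightarrow> nat \<Rightarrow> bool) \<Rightarrow> pred \<Rightarrow> state \<Rightarrow> enat" where
  "RRT S Q x = (INF yt \<in> {(y, t). S x y t}. enat (snd yt) + (Q ! fst (fst yt)) (snd (fst yt)))"

fun HT :: "sem \<Rightarrow> (pred \<times> pred) set" where
  "HT (n, m, S) = {(P, Q). length P = n \<and> length Q = m \<and>
       (\<forall>i < n. \<forall>\<rho>. RRT S Q (i, \<rho>) \<le> (P ! i) \<rho>)}"

end

theory Submission
  imports Defs
begin

inductive_cases IdentE: "exec Ident x y t"
inductive_cases AssignE: "exec (Assign v f) x y t"
inductive_cases JoinE: "exec Join x y t"
inductive_cases TwistE: "exec Twist x y t"
inductive_cases CondE: "exec (Cond b) x y t"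
inductive_cases SeqE: "exec (Seq A B) x y t"
inductive_cases ParE: "exec (Par A B) x y t"
inductive_cases FbE: "exec (Fb k A) x y t"
inductive_cases fbE: "fbiter k A y z t"

lemma range_lemma:
  "(exec A x y t \<longrightarrow> fst x < nin A \<and> fst y < nout A) \<and>
   (fbiter k B u z t' \<longrightarrow> fst z < nout B - k)"
proof -
  have "(exec A x y t \<Longrightarrow> fst x < nin A \<and> fst y < nout A)"
   and "(fbiter k B u z t' \<Longrightarrow> fst z < nout B - k)"
    by (induct rule: exec_fbiter.inducts) auto
  thus ?thesis by blast
qed

lemma exec_range: "exec A x y t \<Longrightarrow> fst x < nin A \<and> fst y < nout A"
  using range_lemma by blast
lemma fbiter_range: "fbiter k B u z t' \<Longrightarrow> fst z < nout B - k"
  using range_lemma by blast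

lemma fbiter_store0:
  assumes "fbiter k A u z t" "t = 0" "\<And>x y. exec A x y 0 \<Longrightarrow> snd y = snd x"
  shows "snd z = snd u"
proof -
  have "exec B x y t' \<Longrightarrow> True"
    and "fbiter k' A' u z t \<Longrightarrow> A' = A \<Longrightarrow> t = 0 \<longrightarrow> snd z = snd u" for B x y t' k' A'
    using assms(3)
    by (induct rule: exec_fbiter.inducts) fastforce+
  thus ?thesis using assms by blast
qed

lemma exec_store0: "exec A x y 0 \<Longrightarrow> snd y = snd x"
proof (induct A arbitrary: x y)
  case (Seq A B)
  from Seq.prems obtain w where "exec A x w 0" "exec B w y 0" by (auto elim!: SeqE)
  then show ?case using Seq.hyps by metis
next
  case (Par A B)
  then show ?case by (auto elim!: ParE)
next
  case (Fb k A)
  from Fb.prems obtain i \<rho> w t1 t2 where x: "x = (i,\<rho>)" and "exec A (i,\<rho>) w t1"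
    "fbiter k A w y t2" "t1 + t2 = 0" by (auto elim!: FbE)
  then show ?case using Fb.hyps fbiter_store0[of k A w y t2] by fastforce
qed (auto elim!: IdentE AssignE JoinE TwistE CondE)

definition fbin :: "nat \<Rightarrow> fc \<Rightarrow> state \<Rightarrow> state" where
  "fbin k A u = (fst u - (nout A - k) + (nin A - k), snd u)"
definition Lk :: "nat \<Rightarrow> fc \<Rightarrow> state \<Rightarrow> state \<Rightarrow> bool" where
  "Lk k A u v = (nout A - k \<le> fst u \<and> (\<exists>t. exec A (fbin k A u) v t))"
definition L0 :: "nat \<Rightarrow> fc \<Rightarrow> state \<Rightarrow> state \<Rightarrow> bool" where
  "L0 k A u v = (nout A - k \<le> fst u \<and> exec A (fbin k A u) v 0)"

lemma fbin_inj: "nout A - k \<le> fst u \<Longrightarrow> nout A - k \<le> fst v \<Longrightarrow> fbin k A u = fbin k A v \<Longrightarrow> u = v"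
  unfolding fbin_def by (cases u; cases v) auto

lemma fbin_ge: "nin A - k \<le> fst (fbin k A u)"
  unfolding fbin_def by simp

lemma fbiter_loop: "nout A - k \<le> fst u \<Longrightarrow> exec A (fbin k A u) y t1 \<Longrightarrow> fbiter k A y z t2
   \<Longrightarrow> fbiter k A u z (t1 + t2)"
  unfolding fbin_def by (cases u) (auto intro: fb_loop)

lemma fbiter_L0: "fbiter k A u z 0 \<Longrightarrow> (L0 k A)\<^sup>*\<^sup>* u z"
proof -
  have "exec B x y t' \<Longrightarrow> True"
    and "fbiter k' A' u z t \<Longrightarrow> t = 0 \<longrightarrow> (L0 k' A')\<^sup>*\<^sup>* u z" for B x y t' k' A' t
    by (induct rule: exec_fbiter.inducts)
      (auto simp: L0_def fbin_def intro: converse_rtranclp_into_rtranclp)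
  thus "fbiter k A u z 0 \<Longrightarrow> (L0 k A)\<^sup>*\<^sup>* u z" by blast
qed

lemma fbiter_claim:
  assumes inj: "\<And>x x' y t. exec A x y t \<Longrightarrow> exec A x' y 0 \<Longrightarrow> x = x'"
  shows "fbiter k A u z t \<Longrightarrow> fbiter k A u' z 0 \<Longrightarrow> (Lk k A)\<^sup>*\<^sup>* u u' \<or> (L0 k A)\<^sup>*\<^sup>* u' u"
proof -
  have "exec B x y t' \<Longrightarrow> True"
    and "fbiter k' A' u z t \<Longrightarrow> k' = k \<Longrightarrow> A' = A \<Longrightarrow> fbiter k A u' z 0 \<Longrightarrow>
          (Lk k A)\<^sup>*\<^sup>* u u' \<or> (L0 k A)\<^sup>*\<^sup>* u' u" for B x y t' k' A' t u'
  proof (induct arbitrary: u' rule: exec_fbiter.inducts)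
    case (fb_exit j A' k' \<rho>)
    then show ?case using fbiter_L0 by blast
  next
    case (fb_loop A' k' j \<rho> y t1 z t2)
    have e: "k' = k" "A' = A" using fb_loop.prems by auto
    have fb_loop: "nout A - k \<le> j" "exec A (j - (nout A - k) + (nin A - k), \<rho>) y t1"
      "fbiter k A y z t2"  "fbiter k A u' z 0"
      using fb_loop.hyps fb_loop.prems unfolding e by auto
    have IH: "(Lk k A)\<^sup>*\<^sup>* y u' \<or> (L0 k A)\<^sup>*\<^sup>* u' y"
      using fb_loop.hyps(5) fb_loop.prems unfolding e by blast
    have Lu: "Lk k A (j,\<rho>) y" using fb_loop unfolding Lk_def fbin_def by auto
    from IH show ?case
    proof
      assume "(Lk k A)\<^sup>*\<^sup>* y u'"
      then have "(Lk k A)\<^sup>*\<^sup>* (j,\<rho>) u'" using Lu converse_rtranclp_into_rtranclp[of "Lk k A"] by blast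
      then show ?thesis by blast
    next
      assume "(L0 k A)\<^sup>*\<^sup>* u' y"
      then show ?thesis
      proof (cases rule: rtranclp.cases)
        case rtrancl_refl
        then show ?thesis using Lu by blast
      next
        case (rtrancl_into_rtrancl v)
        then have "exec A (fbin k A v) y 0" "nout A - k \<le> fst v" unfolding L0_def by auto
        moreover have "exec A (fbin k A (j,\<rho>)) y t1" using fb_loop unfolding fbin_def by simp
        ultimately have "fbin k A (j,\<rho>) = fbin k A v" using inj fb_loop by blast
        then have "v = (j,\<rho>)" using fbin_inj \<open>nout A - k \<le> fst v\<close> fb_loop by (metis fst_conv)
        then show ?thesis using rtrancl_into_rtrancl by blast
      qed
    qed
  qed auto
  thus "fbiter k A u z t \<Longrightarrow> fbiter k A u' z 0 \<Longrightarrow> ?thesis" by blast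
qed

lemma exec_inj: "exec A x y t \<Longrightarrow> exec A x' y 0 \<Longrightarrow> x = x'"
proof (induct A arbitrary: x x' y t)
  case (Seq A B)
  from Seq.prems(1) obtain w t1 t2 where 1: "exec A x w t1" "exec B w y t2" by (auto elim!: SeqE)
  from Seq.prems(2) obtain w' where 2: "exec A x' w' 0" "exec B w' y 0" by (auto elim!: SeqE)
  from 1 2 Seq.hyps(2) have "w = w'" by blast
  with 1 2 Seq.hyps(1) show ?case by blast
next
  case (Par A B)
  from Par.prems(1) show ?case
  proof (cases rule: ParE[consumes 1])
    case (1 i \<rho> j \<rho>')
    from Par.prems(2) show ?thesis
    proof (cases rule: ParE[consumes 1])
      case (1 i' \<rho>2 j' \<rho>2')
      then show ?thesis using Par.hyps(1) \<open>exec A (i, \<rho>) (j, \<rho>') t\<close> \<open>x = (i,\<rho>)\<close> \<open>y = (j,\<rho>')\<close> by blast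
    next
      case (2 i' \<rho>2 j' \<rho>2')
      then show ?thesis using exec_range[of A "(i, \<rho>)" "(j, \<rho>')" t] \<open>y = (j,\<rho>')\<close>
        \<open>exec A (i, \<rho>) (j, \<rho>') t\<close> by auto
    qed
  next
    case (2 i \<rho> j \<rho>')
    from Par.prems(2) show ?thesis
    proof (cases rule: ParE[consumes 1])
      case (1 i' \<rho>2 j' \<rho>2')
      then show ?thesis using exec_range[of A "(i', \<rho>2)" "(j', \<rho>2')" 0] \<open>y = (j + nout A,\<rho>')\<close>
         by auto
    next
      case (2 i' \<rho>2 j' \<rho>2')
      then have "j = j'" "\<rho>' = \<rho>2'" using \<open>y = (j + nout A,\<rho>')\<close> by auto
      then have "(i - nin A, \<rho>) = (i' - nin A, \<rho>2)" using Par.hyps(2) 2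
         \<open>exec B (i - nin A, \<rho>) (j, \<rho>') t\<close> by blast
      then show ?thesis using 2 \<open>x = (i,\<rho>)\<close> \<open>nin A \<le> i\<close> by auto
    qed
  qed
next
  case (Fb k A)
  have injA: "\<And>x x' y t. exec A x y t \<Longrightarrow> exec A x' y 0 \<Longrightarrow> x = x'" using Fb.hyps by blast
  from Fb.prems(1) obtain i \<rho> w t1 t2 where x: "x = (i,\<rho>)" "i < nin A - k" and
     1: "exec A (i,\<rho>) w t1" "fbiter k A w y t2" by (auto elim!: FbE)
  from Fb.prems(2) obtain i' \<rho>' w' where x': "x' = (i',\<rho>')" "i' < nin A - k" and
     2: "exec A (i',\<rho>') w' 0" "fbiter k A w' y 0" by (auto elim!: FbE)
  have "(Lk k A)\<^sup>*\<^sup>* w w' \<or> (L0 k A)\<^sup>*\<^sup>* w' w" using fbiter_claim[of A k w y t2 w'] injA 1 2 by blast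
  then show ?case
  proof
    assume "(Lk k A)\<^sup>*\<^sup>* w w'"
    then show ?thesis
    proof (cases rule: rtranclp.cases)
      case rtrancl_refl
      then show ?thesis using injA 1 2 x x' by blast
    next
      case (rtrancl_into_rtrancl v)
      then obtain tv where "exec A (fbin k A v) w' tv" unfolding Lk_def by auto
      then have "fbin k A v = (i',\<rho>')" using injA 2 by blast
      then show ?thesis using fbin_ge[of A k v] x' by simp
    qed
  next
    assume "(L0 k A)\<^sup>*\<^sup>* w' w"
    then show ?thesis
    proof (cases rule: rtranclp.cases)
      case rtrancl_refl
      then show ?thesis using injA 1 2 x x' by blast
    next
      case (rtrancl_into_rtrancl v)
      then have "exec A (fbin k A v) w 0" unfolding L0_def by auto
      then have "(i,\<rho>) = fbin k A v" using injA 1 by blast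
      then show ?thesis using fbin_ge[of A k v] x by (metis fst_conv not_le)
    qed
  qed
qed (auto elim!: IdentE AssignE JoinE TwistE CondE)

lemma RRT_le: "S x y t \<Longrightarrow> RRT S Q x \<le> enat t + (Q ! fst y) (snd y)"
  unfolding RRT_def by (rule INF_lower2[of "(y,t)"]) auto

lemma RRT_ge: "(\<And>y t. S x y t \<Longrightarrow> v \<le> enat t + (Q ! fst y) (snd y)) \<Longrightarrow> v \<le> RRT S Q x"
  unfolding RRT_def by (rule INF_greatest) auto

lemma RRT_attain:
  assumes "RRT S Q x < \<infinity>"
  shows "\<exists>y t. S x y t \<and> RRT S Q x = enat t + (Q ! fst y) (snd y)"
proof -
  let ?F = "(\<lambda>yt. enat (snd yt) + (Q ! fst (fst yt)) (snd (fst yt))) ` {(y, t). S x y t}"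
  have r: "RRT S Q x = Inf ?F" unfolding RRT_def by simp
  have "?F \<noteq> {}"
  proof
    assume "?F = {}"
    then have "Inf ?F = \<infinity>" by (simp add: Inf_enat_def)
    with assms r show False by simp
  qed
  then obtain a where "a \<in> ?F" by blast
  have gen: "\<And>F::enat set. a \<in> F \<Longrightarrow> Inf F \<in> F"
    by (auto simp: Inf_enat_def intro: LeastI)
  have "Inf ?F \<in> ?F" by (rule gen) fact
  then show ?thesis using r by force
qed

lemma seq_part:
  assumes eq: "nout A = nin B"
  shows "HT (sem (Seq A B)) = HT (sem A) O HT (sem B)"
proof
  show "HT (sem (Seq A B)) \<subseteq> HT (sem A) O HT (sem B)"
  proof clarify
    fix P R assume PR: "(P, R) \<in> HT (sem (Seq A B))"
    define Q where "Q = map (\<lambda>j \<rho>. RRT (exec B) R (j,\<rho>)) [0..<nout A]"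
    have lQ: "length Q = nout A" unfolding Q_def by simp
    have Qj: "j < nout A \<Longrightarrow> (Q ! j) \<rho> = RRT (exec B) R (j,\<rho>)" for j \<rho> unfolding Q_def by simp
    have "(P, Q) \<in> HT (sem A)"
    proof -
      have "RRT (exec A) Q (i,\<rho>) \<le> (P ! i) \<rho>" if "i < nin A" for i \<rho>
      proof -
        have "RRT (exec A) Q (i,\<rho>) \<le> RRT (exec (Seq A B)) R (i,\<rho>)"
        proof (rule RRT_ge)
          fix z t assume "exec (Seq A B) (i, \<rho>) z t"
          then obtain w t1 t2 where 1: "exec A (i,\<rho>) w t1" "exec B w z t2" "t = t1 + t2"
            by (auto elim!: SeqE)
          have "RRT (exec A) Q (i,\<rho>) \<le> enat t1 + (Q ! fst w) (snd w)" using RRT_le 1 by blast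
          also have "(Q ! fst w) (snd w) = RRT (exec B) R w" using Qj exec_range 1 by (cases w) auto
          also have "RRT (exec B) R w \<le> enat t2 + (R ! fst z) (snd z)" using RRT_le 1 by blast
          finally show "RRT (exec A) Q (i,\<rho>) \<le> enat t + (R ! fst z) (snd z)"
            using 1 by (simp add: add.assoc flip: plus_enat_simps(1))
        qed
        also have "\<dots> \<le> (P ! i) \<rho>" using PR that by (simp add: sem_def)
        finally show ?thesis .
      qed
      then show ?thesis using PR lQ by (simp add: sem_def)
    qed
    moreover have "(Q, R) \<in> HT (sem B)" using PR lQ eq Qj by (simp add: sem_def)
    ultimately show "(P, R) \<in> HT (sem A) O HT (sem B)" by blast
  qed
next
  show "HT (sem A) O HT (sem B) \<subseteq> HT (sem (Seq A B))"
  proof clarify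
    fix P Q R assume PQ: "(P, Q) \<in> HT (sem A)" and QR: "(Q, R) \<in> HT (sem B)"
    have "RRT (exec (Seq A B)) R (i,\<rho>) \<le> (P ! i) \<rho>" if "i < nin A" for i \<rho>
    proof -
      have "RRT (exec (Seq A B)) R (i,\<rho>) \<le> RRT (exec A) Q (i,\<rho>)"
      proof (rule RRT_ge)
        fix w t1 assume 1: "exec A (i, \<rho>) w t1"
        have "RRT (exec B) R w \<le> (Q ! fst w) (snd w)"
          using QR exec_range[OF 1] eq by (cases w) (simp add: sem_def)
        moreover have "RRT (exec (Seq A B)) R (i,\<rho>) \<le> enat t1 + RRT (exec B) R w"
        proof (cases "RRT (exec B) R w < \<infinity>")
          case True
          then obtain z t2 where 2: "exec B w z t2" "RRT (exec B) R w = enat t2 + (R ! fst z) (snd z)"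
            using RRT_attain by blast
          have "exec (Seq A B) (i,\<rho>) z (t1 + t2)" using 1 2 by (blast intro: ex_seq)
          then have "RRT (exec (Seq A B)) R (i,\<rho>) \<le> enat (t1 + t2) + (R ! fst z) (snd z)"
            by (rule RRT_le)
          then show ?thesis using 2 by (simp add: add.assoc flip: plus_enat_simps(1))
        next
          case False
          then show ?thesis by simp
        qed
        ultimately show "RRT (exec (Seq A B)) R (i,\<rho>) \<le> enat t1 + (Q ! fst w) (snd w)"
          by (meson add_left_mono order_trans)
      qed
      also have "\<dots> \<le> (P ! i) \<rho>" using PQ that by (simp add: sem_def)
      finally show ?thesis .
    qed
    then show "(P, R) \<in> HT (sem (Seq A B))" using PQ QR by (simp add: sem_def)
  qed
qed

lemma parL:
  assumes "i < nin A" "length R1 = nout A"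
  shows "RRT (exec (Par A B)) (R1 @ R2) (i,\<rho>) = RRT (exec A) R1 (i,\<rho>)"
proof (rule antisym)
  show "RRT (exec (Par A B)) (R1 @ R2) (i,\<rho>) \<le> RRT (exec A) R1 (i,\<rho>)"
  proof (rule RRT_ge)
    fix y t assume 1: "exec A (i, \<rho>) y t"
    obtain j \<rho>' where y: "y = (j,\<rho>')" by (cases y)
    have "exec (Par A B) (i,\<rho>) (j,\<rho>') t" using 1 assms y by (blast intro: ex_parL)
    then have "RRT (exec (Par A B)) (R1 @ R2) (i,\<rho>) \<le> enat t + ((R1 @ R2) ! j) \<rho>'"
      using RRT_le by fastforce
    then show "RRT (exec (Par A B)) (R1 @ R2) (i,\<rho>) \<le> enat t + (R1 ! fst y) (snd y)"
      using exec_range[OF 1] assms y by (simp add: nth_append)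
  qed
next
  show "RRT (exec A) R1 (i,\<rho>) \<le> RRT (exec (Par A B)) (R1 @ R2) (i,\<rho>)"
  proof (rule RRT_ge)
    fix y t assume "exec (Par A B) (i, \<rho>) y t"
    then show "RRT (exec A) R1 (i,\<rho>) \<le> enat t + ((R1 @ R2) ! fst y) (snd y)"
    proof (cases rule: ParE[consumes 1])
      case (1 i' \<rho>2 j \<rho>')
      then show ?thesis using RRT_le[of "exec A" "(i,\<rho>)" "(j,\<rho>')" t R1]
          exec_range[of A "(i,\<rho>)" "(j,\<rho>')" t] assms by (simp add: nth_append)
    next
      case (2 i' \<rho>2 j \<rho>')
      then show ?thesis using assms by simp
    qed
  qed
qed

lemma parR:
  assumes "nin A \<le> i" "length R1 = nout A"
  shows "RRT (exec (Par A B)) (R1 @ R2) (i,\<rho>) = RRT (exec B) R2 (i - nin A,\<rho>)"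
proof (rule antisym)
  show "RRT (exec (Par A B)) (R1 @ R2) (i,\<rho>) \<le> RRT (exec B) R2 (i - nin A,\<rho>)"
  proof (rule RRT_ge)
    fix y t assume 1: "exec B (i - nin A, \<rho>) y t"
    obtain j \<rho>' where y: "y = (j,\<rho>')" by (cases y)
    have "exec (Par A B) (i,\<rho>) (j + nout A,\<rho>') t" using 1 assms y by (blast intro: ex_parR)
    then have "RRT (exec (Par A B)) (R1 @ R2) (i,\<rho>) \<le> enat t + ((R1 @ R2) ! (j + nout A)) \<rho>'"
      using RRT_le by fastforce
    then show "RRT (exec (Par A B)) (R1 @ R2) (i,\<rho>) \<le> enat t + (R2 ! fst y) (snd y)"
      using assms y by (simp add: nth_append)
  qed
next
  show "RRT (exec B) R2 (i - nin A,\<rho>) \<le> RRT (exec (Par A B)) (R1 @ R2) (i,\<rho>)"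
  proof (rule RRT_ge)
    fix y t assume "exec (Par A B) (i, \<rho>) y t"
    then show "RRT (exec B) R2 (i - nin A,\<rho>) \<le> enat t + ((R1 @ R2) ! fst y) (snd y)"
    proof (cases rule: ParE[consumes 1])
      case (1 i' \<rho>2 j \<rho>')
      then show ?thesis using assms by simp
    next
      case (2 i' \<rho>2 j \<rho>')
      then show ?thesis using RRT_le[of "exec B" "(i - nin A,\<rho>)" "(j,\<rho>')" t R2]
          assms by (simp add: nth_append)
    qed
  qed
qed

lemma par_part:
  "HT (sem (Par A B)) =
     {(P1 @ P2, R1 @ R2) | P1 R1 P2 R2. (P1, R1) \<in> HT (sem A) \<and> (P2, R2) \<in> HT (sem B)}"
proof
  show "HT (sem (Par A B)) \<subseteq> {(P1 @ P2, R1 @ R2) | P1 R1 P2 R2. (P1, R1) \<in> HT (sem A) \<and> (P2, R2) \<in> HT (sem B)}"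
  proof clarify
    fix P R assume PR: "(P, R) \<in> HT (sem (Par A B))"
    define P1 where "P1 = take (nin A) P"
    define P2 where "P2 = drop (nin A) P"
    define R1 where "R1 = take (nout A) R"
    define R2 where "R2 = drop (nout A) R"
    have lens: "length P = nin A + nin B" "length R = nout A + nout B" using PR by (simp_all add: sem_def)
    have PP: "P = P1 @ P2" and RR: "R = R1 @ R2" unfolding P1_def P2_def R1_def R2_def by simp_all
    have lR1: "length R1 = nout A" using lens unfolding R1_def by simp
    have H: "\<And>i \<rho>. i < nin A + nin B \<Longrightarrow> RRT (exec (Par A B)) (R1 @ R2) (i,\<rho>) \<le> ((P1 @ P2) ! i) \<rho>"
      using PR PP RR by (simp add: sem_def)
    have 1: "(P1, R1) \<in> HT (sem A)"
    proof -
      have "RRT (exec A) R1 (i,\<rho>) \<le> (P1 ! i) \<rho>" if "i < nin A" for i \<rho>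
        using H[of i \<rho>] parL[OF that lR1, of B R2 \<rho>] that lens unfolding P1_def
        by (simp add: nth_append)
      then show ?thesis using lens lR1 unfolding P1_def by (simp add: sem_def)
    qed
    have 2: "(P2, R2) \<in> HT (sem B)"
    proof -
      have "RRT (exec B) R2 (i,\<rho>) \<le> (P2 ! i) \<rho>" if "i < nin B" for i \<rho>
        using H[of "i + nin A" \<rho>] parR[of A "i + nin A" R1 B R2 \<rho>] that lens lR1 unfolding P1_def P2_def
        by (simp add: nth_append add.commute)
      then show ?thesis using lens unfolding P2_def R2_def by (simp add: sem_def)
    qed
    show "\<exists>P1 R1 P2 R2. (P, R) = (P1 @ P2, R1 @ R2) \<and> (P1, R1) \<in> HT (sem A) \<and> (P2, R2) \<in> HT (sem B)"
      using 1 2 PP RR by blast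
  qed
next
  show "{(P1 @ P2, R1 @ R2) | P1 R1 P2 R2. (P1, R1) \<in> HT (sem A) \<and> (P2, R2) \<in> HT (sem B)} \<subseteq> HT (sem (Par A B))"
  proof clarify
    fix P1 R1 P2 R2 assume 1: "(P1, R1) \<in> HT (sem A)" and 2: "(P2, R2) \<in> HT (sem B)"
    have lens: "length P1 = nin A" "length R1 = nout A" "length P2 = nin B" "length R2 = nout B"
      using 1 2 by (simp_all add: sem_def)
    have "RRT (exec (Par A B)) (R1 @ R2) (i,\<rho>) \<le> ((P1 @ P2) ! i) \<rho>" if "i < nin A + nin B" for i \<rho>
    proof (cases "i < nin A")
      case True
      then show ?thesis using parL[OF True lens(2), of B R2 \<rho>] 1 lens by (simp add: sem_def nth_append)
    next
      case False
      then show ?thesis using parR[of A i R1 B R2 \<rho>] 2 lens that by (simp add: sem_def nth_append)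
    qed
    then show "(P1 @ P2, R1 @ R2) \<in> HT (sem (Par A B))" using lens by (simp add: sem_def)
  qed
qed

lemma loop_term:
  assumes dims: "nin A = n + k" "nout A = m + k" "length R = m" "length Q = k"
  and H: "\<And>v. m \<le> fst v \<Longrightarrow> fst v < m + k \<Longrightarrow>
            RRT (exec A) (R @ Q) (fbin k A v) \<le> ((R @ Q) ! fst v) (snd v)"
  and x: "exec A x y0 t0" "fst x < n"
  and fin: "((R @ Q) ! fst y0) (snd y0) < \<infinity>"
  shows "\<exists>z t2. fbiter k A y0 z t2 \<and> enat t2 + (R ! fst z) (snd z) \<le> ((R @ Q) ! fst y0) (snd y0)"
proof (rule ccontr)
  define W where "W y = ((R @ Q) ! fst y) (snd y)" for y
  define good where "good y \<longleftrightarrow> (\<exists>z t2. fbiter k A y z t2 \<and> enat t2 + (R ! fst z) (snd z) \<le> W y)" for y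
  assume "\<not> ?thesis"
  then have ng0: "\<not> good y0" unfolding good_def W_def by blast
  have mk: "nout A - k = m" "nin A - k = n" using dims by auto
  define I where "I y \<longleftrightarrow> W y < \<infinity> \<and> \<not> good y \<and> fst y < m + k" for y
  define Pr where "Pr y p \<longleftrightarrow> exec A (fbin k A y) (fst p) (snd p) \<and> enat (snd p) + W (fst p) \<le> W y
      \<and> I (fst p) \<and> m \<le> fst y" for y p
  have step: "\<exists>p. Pr y p" if Iy: "I y" for y
  proof -
    have my: "m \<le> fst y"
    proof (rule ccontr)
      assume "\<not> m \<le> fst y"
      then have "fbiter k A y y 0" using fb_exit[of "fst y" A k "snd y"] mk by simp
      moreover have "W y = (R ! fst y) (snd y)" unfolding W_def using \<open>\<not> m \<le> fst y\<close> dims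
        by (simp add: nth_append)
      ultimately have "good y" unfolding good_def by (intro exI[of _ y] exI[of _ 0]) (simp add: zero_enat_def)
      then show False using Iy unfolding I_def by blast
    qed
    have "RRT (exec A) (R @ Q) (fbin k A y) \<le> W y" using H[OF my] Iy unfolding I_def W_def by blast
    then have "RRT (exec A) (R @ Q) (fbin k A y) < \<infinity>" using Iy unfolding I_def using le_less_trans by blast
    then obtain y' t where 1: "exec A (fbin k A y) y' t" "RRT (exec A) (R @ Q) (fbin k A y) = enat t + W y'"
      using RRT_attain unfolding W_def by blast
    have le: "enat t + W y' \<le> W y" using 1 \<open>RRT (exec A) (R @ Q) (fbin k A y) \<le> W y\<close> by simp
    have fin': "W y' < \<infinity>" using le Iy unfolding I_def by (cases "W y'") auto
    have rng: "fst y' < m + k" using exec_range[OF 1(1)] dims by simp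
    have ng: "\<not> good y'"
    proof
      assume "good y'"
      then obtain z t2 where 2: "fbiter k A y' z t2" "enat t2 + (R ! fst z) (snd z) \<le> W y'"
        unfolding good_def by blast
      have "fbiter k A y z (t + t2)" using fbiter_loop[of A k y y' t z t2] my mk 1 2 by simp
      moreover have "enat (t + t2) + (R ! fst z) (snd z) \<le> W y"
      proof -
        have "enat (t + t2) + (R ! fst z) (snd z) = enat t + (enat t2 + (R ! fst z) (snd z))"
          by (simp add: add.assoc flip: plus_enat_simps(1))
        also have "\<dots> \<le> enat t + W y'" using 2 by (simp add: add_left_mono)
        finally show ?thesis using le by simp
      qed
      ultimately have "good y" unfolding good_def by blast
      then show False using Iy unfolding I_def by blast
    qed
    show ?thesis unfolding Pr_def I_def using 1 le fin' rng ng my by (intro exI[of _ "(y',t)"]) auto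
  qed
  define nxt where "nxt y = (SOME p. Pr y p)" for y
  define p where "p s = ((fst \<circ> nxt) ^^ s) y0" for s
  define c where "c s = snd (nxt (p s))" for s
  have pS: "p (Suc s) = fst (nxt (p s))" for s unfolding p_def by simp
  have I0: "I y0" unfolding I_def W_def using ng0 fin exec_range[OF x(1)] dims by simp
  have Ip: "I (p s)" for s
  proof (induct s)
    case 0 then show ?case using I0 unfolding p_def by simp
  next
    case (Suc s)
    have "Pr (p s) (nxt (p s))" unfolding nxt_def using step[OF Suc] by (rule someI_ex)
    then show ?case unfolding Pr_def pS by blast
  qed
  have Prp: "Pr (p s) (p (Suc s), c s)" for s
  proof -
    have "Pr (p s) (nxt (p s))" unfolding nxt_def using step[OF Ip] by (rule someI_ex)
    then show ?thesis unfolding pS c_def by simp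
  qed
  have ex: "exec A (fbin k A (p s)) (p (Suc s)) (c s)" and dec: "enat (c s) + W (p (Suc s)) \<le> W (p s)"
    and mp: "m \<le> fst (p s)" and rp: "fst (p s) < m + k" for s
    using Prp[of s] Ip[of s] unfolding Pr_def I_def by auto
  define w where "w s = the_enat (W (p s))" for s
  have Ww: "W (p s) = enat (w s)" for s using Ip[of s] unfolding I_def w_def by auto
  have decw: "c s + w (Suc s) \<le> w s" for s using dec[of s] unfolding Ww by simp
  have wmono: "a \<le> b \<Longrightarrow> w b \<le> w a" for a b
  proof -
    have ws: "w (Suc s) \<le> w s" for s using decw[of s] by linarith
    show "a \<le> b \<Longrightarrow> w b \<le> w a" using lift_Suc_antimono_le[of w, OF ws] by blast
  qed
  define v where "v = (LEAST v. v \<in> range w)"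
  have "v \<in> range w" unfolding v_def by (rule LeastI[of _ "w 0"]) simp
  then obtain S where S: "w S = v" by (auto simp: image_iff)
  have wS: "s \<ge> S \<Longrightarrow> w s = w S" for s
  proof -
    assume "s \<ge> S"
    have "v \<le> w s" unfolding v_def by (rule Least_le) simp
    then show "w s = w S" using wmono[OF \<open>s \<ge> S\<close>] S by simp
  qed
  have c0: "c s = 0" if "s \<ge> S" for s
  proof -
    have "w s = w S" by (rule wS) (rule that)
    moreover have "w (Suc s) = w S" by (rule wS) (use that in simp)
    ultimately
    show ?thesis using decw[of s] by simp
  qed
  have st: "s \<ge> S \<Longrightarrow> snd (p s) = snd (p S)" for s
  proof (induct s rule: dec_induct)
    case base then show ?case by simp
  next
    case (step s)
    have "snd (p (Suc s)) = snd (fbin k A (p s))" using exec_store0[of A "fbin k A (p s)" "p (Suc s)"] ex[of s] c0[of s] step by simp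
    then show ?case using step by (simp add: fbin_def)
  qed
  have "\<not> inj_on p {S..S+k}"
  proof
    assume inj: "inj_on p {S..S+k}"
    have sub: "p ` {S..S+k} \<subseteq> {m..<m+k} \<times> {snd (p S)}"
    proof
      fix y assume "y \<in> p ` {S..S+k}"
      then obtain s where s: "s \<in> {S..S+k}" "y = p s" by blast
      then have "snd (p s) = snd (p S)" by (intro st) simp
      then show "y \<in> {m..<m+k} \<times> {snd (p S)}" using mp[of s] rp[of s] s(2) by (cases "p s") simp
    qed
    then have "card {S..S+k} \<le> card ({m..<m+k} \<times> {snd (p S)})"
      using card_inj_on_le[OF inj sub] by simp
    then show False by (simp add: card_cartesian_product)
  qed
  then obtain a0 b0 where "a0 \<noteq> b0" "p a0 = p b0" unfolding inj_on_def by blast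
  then have "(a0 < b0 \<and> p a0 = p b0) \<or> (b0 < a0 \<and> p b0 = p a0)" by auto
  then obtain a b where ab: "a < b" "p a = p b" by blast
  have cz: "c (b' - 1) = 0" if "a' < b'" "p a' = p b'" for a' b'
  proof -
    have bb: "Suc (b' - 1) = b'" using that by simp
    have "c (b' - 1) + w b' \<le> w (b' - 1)" using decw[of "b' - 1"] bb by simp
    moreover have "w (b' - 1) \<le> w a'" using wmono[of a' "b' - 1"] that by simp
    moreover have "w a' = w b'" using that by (simp add: w_def)
    ultimately show ?thesis by linarith
  qed
  have "\<And>b. a < b \<Longrightarrow> p a = p b \<Longrightarrow> False"
  proof (induct a)
    case 0
    have bb: "Suc (b - 1) = b" using 0 by simp
    have z: "exec A (fbin k A (p (b - 1))) (p b) 0" using ex[of "b-1"] cz[OF 0] bb by simp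
    have "p 0 = y0" unfolding p_def by simp
    then have "p b = y0" using 0 by simp
    then have "exec A x (p b) t0" using x by simp
    then have "x = fbin k A (p (b - 1))" using z by (rule exec_inj)
    then show False using fbin_ge[of A k "p (b - 1)"] mk x(2) by simp
  next
    case (Suc a)
    have bb: "Suc (b - 1) = b" using Suc by simp
    have z: "exec A (fbin k A (p (b - 1))) (p b) 0" using ex[of "b-1"] cz[OF Suc(2,3)] bb by simp
    have "exec A (fbin k A (p a)) (p b) (c a)" using ex[of a] Suc(3) by simp
    then have "fbin k A (p a) = fbin k A (p (b - 1))" using z by (rule exec_inj)
    then have "p a = p (b - 1)" using fbin_inj[of A k "p a" "p (b - 1)"] mp mk by simp
    moreover have "a < b - 1" using Suc(2) by simp
    ultimately show False using Suc(1)[of "b - 1"] by blast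
  qed
  then show False using ab by blast
qed

lemma fb_part:
  assumes dims: "nin A = n + k" "nout A = m + k" and lP: "length P = n" and lR: "length R = m"
  shows "(P, R) \<in> HT (sem (Fb k A)) \<longleftrightarrow> (\<exists>Q. length Q = k \<and> (P @ Q, R @ Q) \<in> HT (sem A))"
proof
  have mk: "nout A - k = m" "nin A - k = n" using dims by auto
  assume PR: "(P, R) \<in> HT (sem (Fb k A))"
  then have HP: "\<And>i \<rho>. i < n \<Longrightarrow> RRT (exec (Fb k A)) R (i,\<rho>) \<le> (P ! i) \<rho>"
    using mk by (simp add: sem_def)
  define Q where "Q = map (\<lambda>j \<rho>. RRT (fbiter k A) R (m + j, \<rho>)) [0..<k]"
  have lQ: "length Q = k" unfolding Q_def by simp
  have G: "RRT (exec A) (R @ Q) x \<le> enat (t1 + t2) + (R ! fst z) (snd z)"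
    if 1: "exec A x w t1" and 2: "fbiter k A w z t2" for x w t1 z t2
  proof -
    have "RRT (exec A) (R @ Q) x \<le> enat t1 + ((R @ Q) ! fst w) (snd w)" using RRT_le 1 by blast
    also have "((R @ Q) ! fst w) (snd w) \<le> enat t2 + (R ! fst z) (snd z)"
    proof (cases "fst w < m")
      case True
      from 2 have "z = w \<and> t2 = 0"
      proof (cases rule: fbE[consumes 1])
        case (1 j \<rho>) then show ?thesis by simp
      next
        case (2 j \<rho> y t1 t2') then show ?thesis using True mk by simp
      qed
      then show ?thesis using True lR by (simp add: nth_append)
    next
      case False
      have "fst w < m + k" using exec_range[OF 1] dims by simp
      then have "((R @ Q) ! fst w) (snd w) = RRT (fbiter k A) R w"
        using False lR unfolding Q_def by (cases w) (simp add: nth_append)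
      also have "\<dots> \<le> enat t2 + (R ! fst z) (snd z)" using RRT_le 2 by blast
      finally show ?thesis .
    qed
    finally show ?thesis by (simp add: add.assoc add_left_mono flip: plus_enat_simps(1))
  qed
  have "RRT (exec A) (R @ Q) (i,\<rho>) \<le> ((P @ Q) ! i) \<rho>" if "i < n + k" for i \<rho>
  proof (cases "i < n")
    case True
    have "RRT (exec A) (R @ Q) (i,\<rho>) \<le> RRT (exec (Fb k A)) R (i,\<rho>)"
    proof (rule RRT_ge)
      fix z t assume "exec (Fb k A) (i, \<rho>) z t"
      then obtain w t1 t2 where "exec A (i,\<rho>) w t1" "fbiter k A w z t2" "t = t1 + t2"
        by (auto elim!: FbE)
      then show "RRT (exec A) (R @ Q) (i,\<rho>) \<le> enat t + (R ! fst z) (snd z)" using G by blast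
    qed
    also have "\<dots> \<le> (P ! i) \<rho>" using HP True by blast
    finally show ?thesis using True lP by (simp add: nth_append)
  next
    case False
    have "((P @ Q) ! i) \<rho> = RRT (fbiter k A) R (m + (i - n), \<rho>)"
      using False that lP unfolding Q_def by (simp add: nth_append)
    moreover have "RRT (exec A) (R @ Q) (i,\<rho>) \<le> RRT (fbiter k A) R (m + (i - n), \<rho>)"
    proof (rule RRT_ge)
      fix z t assume "fbiter k A (m + (i - n), \<rho>) z t"
      then show "RRT (exec A) (R @ Q) (i,\<rho>) \<le> enat t + (R ! fst z) (snd z)"
      proof (cases rule: fbE[consumes 1])
        case (1 j \<rho>') then show ?thesis using mk by simp
      next
        case (2 j \<rho>' y t1 t2)
        have e: "j + n - m = i" using 2 False by auto
        have "exec A (i,\<rho>) y t1" using 2 e mk by simp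
        then show ?thesis using G 2 by blast
      qed
    qed
    ultimately show ?thesis by simp
  qed
  then show "\<exists>Q. length Q = k \<and> (P @ Q, R @ Q) \<in> HT (sem A)"
    using lQ lP lR dims by (intro exI[of _ Q]) (simp add: sem_def)
next
  have mk: "nout A - k = m" "nin A - k = n" using dims by auto
  assume "\<exists>Q. length Q = k \<and> (P @ Q, R @ Q) \<in> HT (sem A)"
  then obtain Q where lQ: "length Q = k" and HQ: "(P @ Q, R @ Q) \<in> HT (sem A)" by blast
  have H: "\<And>i \<rho>. i < n + k \<Longrightarrow> RRT (exec A) (R @ Q) (i,\<rho>) \<le> ((P @ Q) ! i) \<rho>"
    using HQ dims by (simp add: sem_def)
  have H': "RRT (exec A) (R @ Q) (fbin k A v) \<le> ((R @ Q) ! fst v) (snd v)"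
    if "m \<le> fst v" "fst v < m + k" for v
  proof -
    have "fbin k A v = (fst v - m + n, snd v)" unfolding fbin_def using mk by simp
    moreover have a: "fst v + n - m < n + k" "\<not> fst v + n - m < n" "fst v + n - m - n = fst v - m"
      using that by auto
    ultimately show ?thesis using H[of "fst v - m + n" "snd v"] that lP lR by (simp add: nth_append)
  qed
  have "RRT (exec (Fb k A)) R (i,\<rho>) \<le> (P ! i) \<rho>" if iN: "i < n" for i \<rho>
  proof (cases "(P ! i) \<rho> < \<infinity>")
    case False then show ?thesis by simp
  next
    case True
    have le: "RRT (exec A) (R @ Q) (i,\<rho>) \<le> (P ! i) \<rho>" using H[of i \<rho>] that lP by (simp add: nth_append)
    then have "RRT (exec A) (R @ Q) (i,\<rho>) < \<infinity>" using True le_less_trans by blast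
    then obtain y0 t0 where 1: "exec A (i,\<rho>) y0 t0"
       "RRT (exec A) (R @ Q) (i,\<rho>) = enat t0 + ((R @ Q) ! fst y0) (snd y0)"
      using RRT_attain by blast
    have fin: "((R @ Q) ! fst y0) (snd y0) < \<infinity>"
      using 1(2) \<open>RRT (exec A) (R @ Q) (i,\<rho>) < \<infinity>\<close> by (cases "((R @ Q) ! fst y0) (snd y0)") auto
    obtain z t2 where 2: "fbiter k A y0 z t2" "enat t2 + (R ! fst z) (snd z) \<le> ((R @ Q) ! fst y0) (snd y0)"
      using loop_term[OF dims lR lQ H' 1(1) _ fin] iN by force
    have "exec (Fb k A) (i,\<rho>) z (t0 + t2)" using ex_fb[of i A k \<rho> y0 t0 z t2] 1 2 mk that by simp
    then have "RRT (exec (Fb k A)) R (i,\<rho>) \<le> enat (t0 + t2) + (R ! fst z) (snd z)" by (rule RRT_le)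
    also have "\<dots> = enat t0 + (enat t2 + (R ! fst z) (snd z))"
      by (simp add: add.assoc flip: plus_enat_simps(1))
    also have "\<dots> \<le> enat t0 + ((R @ Q) ! fst y0) (snd y0)" using 2 by (simp add: add_left_mono)
    also have "\<dots> \<le> (P ! i) \<rho>" using 1 le by simp
    finally show ?thesis .
  qed
  then show "(P, R) \<in> HT (sem (Fb k A))" using lP lR mk by (simp add: sem_def)
qed

theorem theorem4p3:
  shows "(\<forall>A B. wf A \<and> wf B \<and> nout A = nin B \<longrightarrow>
            HT (sem (Seq A B)) = HT (sem A) O HT (sem B))
       \<and> (\<forall>A B. wf A \<and> wf B \<longrightarrow>
            HT (sem (Par A B)) =
              {(P1 @ P2, R1 @ R2) | P1 R1 P2 R2. (P1, R1) \<in> HT (sem A) \<and> (P2, R2) \<in> HT (sem B)})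
       \<and> (\<forall>A n m k. wf A \<and> nin A = n + k \<and> nout A = m + k \<longrightarrow>
            (\<forall>P R. length P = n \<longrightarrow> length R = m \<longrightarrow>
               ((P, R) \<in> HT (sem (Fb k A)) \<longleftrightarrow>
                (\<exists>Q. length Q = k \<and> (P @ Q, R @ Q) \<in> HT (sem A)))))"
proof (intro conjI allI impI)
  fix A B assume "wf A \<and> wf B \<and> nout A = nin B"
  then show "HT (sem (Seq A B)) = HT (sem A) O HT (sem B)" by (intro seq_part) simp
next
  fix A B
  show "HT (sem (Par A B)) =
     {(P1 @ P2, R1 @ R2) | P1 R1 P2 R2. (P1, R1) \<in> HT (sem A) \<and> (P2, R2) \<in> HT (sem B)}"
    by (rule par_part)
next
  fix A :: fc and n m k :: nat and P R :: pred
  assume "wf A \<and> nin A = n + k \<and> nout A = m + k" "length P = n" "length R = m"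
  then show "((P, R) \<in> HT (sem (Fb k A))) = (\<exists>Q. length Q = k \<and> (P @ Q, R @ Q) \<in> HT (sem A))"
    by (intro fb_part) simp_all
qed

end
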